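(* Let $n,d\ge1$ and let $W$ be a word over a totally ordered alphabet. If $W$ contains $n$ pairwise non-overlapping occurrences of the same word $u$ of length $nd$, then $W$ is $(n,d)$-reducible.
   Context: A subword is a contiguous factor. Two words $u,v$ are comparable if neither is a prefix of the other; for comparable $u,v$ write $u\succ v$ if at the first position where they differ the letter of $u$ is larger. $W$ is $n$-divisible if it contains a subword $u_1\cdots u_n$ with nonempty $u_i$ and $u_1\succ\dots\succ u_n$. $W$ is $(n,d)$-reducible if it is $n$-divisible or contains a subword $u^d$ with $u$ nonempty. *)

theory Defs
  imports Main
begin

definition subword :: "'a list \<Rightarrow> 'a list \<Rightarrow> bool" where
  "subword v W \<longleftrightarrow> (\<exists>p s. W = p @ v @ s)"

definition comparable :: "'a list \<Rightarrow> 'a list \<Rightarrow> bool" where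
  "comparable u v \<longleftrightarrow> \<not> (\<exists>z. v = u @ z) \<and> \<not> (\<exists>z. u = v @ z)"

definition succ_word :: "'a::linorder list \<Rightarrow> 'a list \<Rightarrow> bool" where
  "succ_word u v \<longleftrightarrow> comparable u v \<and>
     (\<exists>p a b x y. u = p @ a # x \<and> v = p @ b # y \<and> a > b)"

definition divisible :: "nat \<Rightarrow> 'a::linorder list \<Rightarrow> bool" where
  "divisible n W \<longleftrightarrow> (\<exists>us. length us = n \<and> (\<forall>x\<in>set us. x \<noteq> []) \<and>
     (\<forall>i. Suc i < n \<longrightarrow> succ_word (us ! i) (us ! Suc i)) \<and> subword (concat us) W)"

definition reducible :: "nat \<Rightarrow> nat \<Rightarrow> 'a::linorder list \<Rightarrow> bool" where
  "reducible n d W \<longleftrightarrow> divisible n W \<or>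
     (\<exists>u. u \<noteq> [] \<and> subword (concat (replicate d u)) W)"

definition occurs_at :: "'a list \<Rightarrow> 'a list \<Rightarrow> nat \<Rightarrow> bool" where
  "occurs_at u W i \<longleftrightarrow> i + length u \<le> length W \<and> take (length u) (drop i W) = u"

end

theory Submission
  imports Defs "HOL-Library.List_Lexorder"
begin

lemma strict_list_of_set:
  fixes A :: "'b::linorder set"
  assumes "finite A"
  shows "\<exists>xs. length xs = card A \<and> set xs = A \<and> (\<forall>k. Suc k < card A \<longrightarrow> xs ! k < xs ! Suc k)"
proof -
  obtain xs where xs: "sorted_wrt (<) xs" "set xs = A"
    using finite_set_strict_sorted[OF assms] by blast
  have d: "distinct xs" using xs(1) strict_sorted_iff by blast
  hence l: "length xs = card A" using xs(2) distinct_card by fastforce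
  show ?thesis
    using xs l sorted_wrt_nth_less[OF xs(1)] by (intro exI[of _ xs]) auto
qed

definition sl :: "'a list \<Rightarrow> nat \<Rightarrow> nat \<Rightarrow> 'a list" where
  "sl W i j = take (j - i) (drop i W)"

lemma sl_append:
  assumes "i \<le> j" "j \<le> k"
  shows "sl W i j @ sl W j k = sl W i k"
proof -
  have "k - i = (j - i) + (k - j)" using assms by simp
  then have "take (k - i) (drop i W) = take (j-i) (drop i W) @ take (k-j) (drop (j-i) (drop i W))"
    using take_add[of "j-i" "k-j" "drop i W"] by simp
  also have "drop (j-i) (drop i W) = drop j W" using assms by simp
  finally show ?thesis unfolding sl_def by simp
qed

lemma sl_subword: "i \<le> j \<Longrightarrow> subword (sl W i j) W"
proof -
  assume "i \<le> j"
  then have "take j W = take i W @ take (j-i) (drop i W)"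
    using take_add[of i "j-i" W] by simp
  then have "W = take i W @ sl W i j @ drop j W"
    unfolding sl_def by (metis append.assoc append_take_drop_id)
  then show ?thesis unfolding subword_def by blast
qed

lemma concat_slices:
  assumes "\<forall>k<m. b k \<le> b (Suc k)"
  shows "concat (map (\<lambda>k. sl W (b k) (b (Suc k))) [0..<m]) = sl W (b 0) (b m) \<and> b 0 \<le> b m"
  using assms
proof (induction m)
  case 0
  then show ?case by (simp add: sl_def)
next
  case (Suc m)
  then have ih: "concat (map (\<lambda>k. sl W (b k) (b (Suc k))) [0..<m]) = sl W (b 0) (b m)" "b 0 \<le> b m"
    by auto
  have "b m \<le> b (Suc m)" using Suc.prems by auto
  then show ?case using ih sl_append[of "b 0" "b m" "b (Suc m)" W] by simp
qed

lemma subword_trans: "subword x y \<Longrightarrow> subword y z \<Longrightarrow> subword x z"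
  unfolding subword_def by (metis append.assoc)

lemma periodic:
  assumes "drop a u = drop b u @ z" "a \<le> b" "a \<le> i" "i + (b-a) < length u"
  shows "u!i = u!(i+(b-a))"
proof -
  have "u!i = drop a u ! (i-a)" using assms(2-4) by simp
  also have "\<dots> = drop b u ! (i-a)"
  proof -
    have "i - a < length (drop b u)" using assms(2-4) by simp
    then show ?thesis using assms(1) by (simp add: nth_append)
  qed
  also have "\<dots> = u!(i+(b-a))"
  proof -
    have "b + (i - a) = i + (b - a)" using assms(2,3) by simp
    then show ?thesis using assms by simp
  qed
  finally show ?thesis .
qed

lemma blocks:
  assumes per: "\<forall>i. a \<le> i \<longrightarrow> i + p < length u \<longrightarrow> u!i = u!(i+p)"
  shows "a + j*p + p \<le> length u \<Longrightarrow> take p (drop (a+j*p) u) = take p (drop a u)"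
proof (induction j)
  case 0
  then show ?case by simp
next
  case (Suc j)
  have "take p (drop (a+Suc j*p) u) = take p (drop (a+j*p) u)"
  proof (rule nth_equalityI)
    show "length (take p (drop (a + Suc j * p) u)) = length (take p (drop (a + j * p) u))"
      using Suc.prems by simp
    fix t assume "t < length (take p (drop (a + Suc j * p) u))"
    then have t: "t < p" using Suc.prems by simp
    have "u ! (a + j*p + t) = u ! (a + j*p + t + p)"
      using per Suc.prems t by auto
    then show "take p (drop (a + Suc j * p) u) ! t = take p (drop (a + j * p) u) ! t"
      using Suc.prems t by (simp add: add.commute add.left_commute)
  qed
  also have "\<dots> = take p (drop a u)" using Suc by simp
  finally show ?case .
qed

lemma powers:
  assumes per: "\<forall>i. a \<le> i \<longrightarrow> i + p < length u \<longrightarrow> u!i = u!(i+p)"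
  shows "a + j*p \<le> length u \<Longrightarrow> concat (replicate j (take p (drop a u))) = take (j*p) (drop a u)"
proof (induction j)
  case 0
  then show ?case by simp
next
  case (Suc j)
  have "concat (replicate (Suc j) (take p (drop a u))) = concat (replicate j (take p (drop a u))) @ take p (drop a u)"
    by (induction j) auto
  also have "\<dots> = take (j*p) (drop a u) @ take p (drop (a+j*p) u)"
    using Suc blocks[OF per, of j] by simp
  also have "\<dots> = take (j * p + p) (drop a u)"
    using take_add[of "j*p" p "drop a u"] by (simp add: add.commute)
  also have "\<dots> = take (Suc j * p) (drop a u)"
    by (simp add: add.commute)
  finally show ?case .
qed

lemma power_from_prefix:
  assumes "a < b" "drop a u = drop b u @ z" "a + d*(b-a) \<le> length u"
  shows "\<exists>w. w \<noteq> [] \<and> subword (concat (replicate d w)) u"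
proof -
  have per: "\<forall>i. a \<le> i \<longrightarrow> i + (b-a) < length u \<longrightarrow> u!i = u!(i+(b-a))"
    using periodic[OF assms(2)] assms(1) by auto
  show ?thesis
  proof (cases "d = 0")
    case True
    then show ?thesis
      by (intro exI[of _ "[undefined]"]) (auto simp: subword_def)
  next
    case False
    then have "a + (b-a) \<le> length u" using assms(3)
    proof -
      have "b-a \<le> d*(b-a)" using False by simp
      then show ?thesis using assms(3) by linarith
    qed
    then have ne: "take (b-a) (drop a u) \<noteq> []" using assms(1) by simp
    have "concat (replicate d (take (b-a) (drop a u))) = take (d*(b-a)) (drop a u)"
      using powers[OF per] assms(3) by simp
    moreover have "subword (take (d*(b-a)) (drop a u)) u"
      using sl_subword[of a "a + d*(b-a)" u] unfolding sl_def by simp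
    ultimately show ?thesis using ne by metis
  qed
qed

lemma occurs_subword: "occurs_at u W i \<Longrightarrow> subword u W"
  unfolding occurs_at_def using sl_subword[of i "i + length u" W] unfolding sl_def by simp

lemma comparable_sym: "comparable x y \<Longrightarrow> comparable y x"
  unfolding comparable_def by blast

lemma succ_from_prefix:
  fixes x y :: "'a::linorder list"
  assumes "comparable x y" "y < x"
  shows "succ_word (x @ X') (y @ Y')"
proof -
  from assms(2) have "(y,x) \<in> lexord {(u,v). u<v}" by (simp add: list_less_def)
  then obtain p a b v w where ab: "b < a" "y = p @ b # w" "x = p @ a # v"
    using assms(1) unfolding lexord_def comparable_def by auto
  have "comparable (x @ X') (y @ Y')"
    unfolding comparable_def using ab by auto
  then show ?thesis unfolding succ_word_def using ab
    by (intro conjI exI[of _ p] exI[of _ a] exI[of _ b] exI[of _ "v @ X'"] exI[of _ "w @ Y'"]) auto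
qed

theorem lemmac:
  fixes W u :: "'a::linorder list" and n d :: nat and pos :: "nat \<Rightarrow> nat"
  assumes "n \<ge> 1" and "d \<ge> 1"
    and "length u = n * d"
    and "\<forall>k<n. occurs_at u W (pos k)"
    and "\<forall>j<n. \<forall>k<n. j \<noteq> k \<longrightarrow> pos j + length u \<le> pos k \<or> pos k + length u \<le> pos j"
  shows "reducible n d W"
proof -
  have nnd: "n \<le> n * d" using assms(2) by simp
  have uW: "subword u W" using assms(1,4) occurs_subword by auto
  show ?thesis
  proof (cases "\<exists>a b. a < b \<and> b < n \<and> \<not> comparable (drop a u) (drop b u)")
    case True
    then obtain a b where ab: "a < b" "b < n" "\<not> comparable (drop a u) (drop b u)" by blast
    have "\<not> (\<exists>z. drop b u = drop a u @ z)"
    proof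
      assume "\<exists>z. drop b u = drop a u @ z"
      then obtain z where "drop b u = drop a u @ z" by blast
      then have "length (drop b u) = length (drop a u) + length z" by simp
      moreover have "length (drop b u) = length u - b" "length (drop a u) = length u - a" by simp_all
      ultimately show False using ab nnd assms(3) by linarith
    qed
    then obtain z where z: "drop a u = drop b u @ z" using ab(3) unfolding comparable_def by blast
    have "a + d*(b-a) \<le> length u"
    proof -
      have h1: "a \<le> d*a" using assms(2) by simp
      have h2: "d*a + d*(b-a) = d*b" using ab(1) by (simp add: add_mult_distrib2[symmetric])
      have h3: "d*b \<le> d*n" using ab(2) by simp
      have h4: "length u = d*n" using assms(3) by (simp add: mult.commute)
      from h1 h2 h3 h4 show ?thesis by linarith
    qed
    then obtain w where "w \<noteq> []" "subword (concat (replicate d w)) u"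
      using power_from_prefix[OF ab(1) z] by blast
    then show ?thesis unfolding reducible_def using uW subword_trans by blast
  next
    case False
    then have cmp: "\<And>a b. a < n \<Longrightarrow> b < n \<Longrightarrow> a \<noteq> b \<Longrightarrow> comparable (drop a u) (drop b u)"
      by (metis comparable_sym nat_neq_iff)
    define D where "D = (\<lambda>i. drop i u) ` {..<n}"
    have injD: "inj_on (\<lambda>i. drop i u) {..<n}"
    proof (rule inj_onI)
      fix i j assume "i \<in> {..<n}" "j \<in> {..<n}" "drop i u = drop j u"
      then have "length (drop i u) = length (drop j u)" "i < n" "j < n" by auto
      then have "n*d - i = n*d - j" "i < n" "j < n" using assms(3) by simp_all
      then show "i = j" using nnd by linarith
    qed
    have cD: "card D = n" unfolding D_def using card_image[OF injD] by simp
    obtain L where L: "length L = n" "set L = D" "\<forall>k. Suc k < n \<longrightarrow> L ! k < L ! Suc k"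
      using strict_list_of_set[of D] cD unfolding D_def by auto
    define t where "t k = L ! (n - 1 - k)" for k
    define oo where "oo k = n * d - length (t k)" for k
    have tD: "t k \<in> D" if "k < n" for k unfolding t_def using L that by auto
    have to: "t k = drop (oo k) u \<and> oo k < n" if kk: "k < n" for k
    proof -
      obtain i where "i < n" "t k = drop i u" using tD[OF kk] unfolding D_def by auto
      moreover then have "n * d - length (t k) = i"
      proof -
        have "length (t k) = n * d - i" using \<open>t k = drop i u\<close> assms(3) by simp
        then show ?thesis using \<open>i < n\<close> nnd by linarith
      qed
      ultimately show ?thesis unfolding oo_def by simp
    qed
    have tdec: "t (Suc k) < t k" if "Suc k < n" for k
    proof -
      have "Suc (n - 1 - Suc k) < n" "Suc (n - 1 - Suc k) = n - 1 - k" using that by auto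
      then show ?thesis unfolding t_def using L(3) by metis
    qed
    have tcmp: "comparable (t k) (t (Suc k))" if "Suc k < n" for k
    proof -
      have "t k \<noteq> t (Suc k)" using tdec[OF that] by auto
      then have "oo k \<noteq> oo (Suc k)" using to[of k] to[of "Suc k"] that by auto
      then show ?thesis using cmp[of "oo k" "oo (Suc k)"] to[of k] to[of "Suc k"] that by auto
    qed
    have injP: "inj_on pos {..<n}"
    proof (rule inj_onI)
      fix i j assume "i \<in> {..<n}" "j \<in> {..<n}" "pos i = pos j"
      show "i = j"
      proof (rule ccontr)
        assume "i \<noteq> j"
        then have "pos i + length u \<le> pos j \<or> pos j + length u \<le> pos i"
          using assms(5) \<open>i \<in> {..<n}\<close> \<open>j \<in> {..<n}\<close> by auto
        moreover have "1 \<le> length u" using assms(1,3) nnd by linarith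
        ultimately show False using \<open>pos i = pos j\<close> by linarith
      qed
    qed
    obtain Q where Q: "length Q = n" "set Q = pos ` {..<n}" "\<forall>k. Suc k < n \<longrightarrow> Q ! k < Q ! Suc k"
      using strict_list_of_set[of "pos ` {..<n}"] card_image[OF injP] by auto
    have Qocc: "occurs_at u W (Q ! k)" if "k < n" for k
    proof -
      have "Q ! k \<in> pos ` {..<n}" using Q that by (metis nth_mem)
      then show ?thesis using assms(4) by auto
    qed
    have Qgap: "Q ! k + n * d \<le> Q ! Suc k" if "Suc k < n" for k
    proof -
      have "Q ! k \<in> pos ` {..<n}" "Q ! Suc k \<in> pos ` {..<n}" using Q that
        by (metis Suc_lessD nth_mem)+
      then obtain i j where ij: "i < n" "j < n" "pos i = Q ! k" "pos j = Q ! Suc k" by auto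
      have lt: "Q ! k < Q ! Suc k" using Q that by auto
      then have "i \<noteq> j" using ij by auto
      then show ?thesis using assms(5) ij lt assms(3) by fastforce
    qed
    define b where "b k = (if k < n then Q ! k + oo k else Q ! (n - 1) + n * d)" for k
    have bge: "Q ! k + n * d \<le> b (Suc k)" if "k < n" for k
    proof (cases "Suc k < n")
      case True
      then show ?thesis using Qgap[OF True] unfolding b_def by simp
    next
      case False
      then have "k = n - 1" using that by simp
      then show ?thesis unfolding b_def using that by simp
    qed
    have bmono: "\<forall>k<n. b k \<le> b (Suc k)"
    proof (intro allI impI)
      fix k assume k: "k < n"
      have "b k = Q ! k + oo k" unfolding b_def using k by simp
      also have "\<dots> \<le> Q ! k + n * d" using to[OF k] nnd by linarith
      finally show "b k \<le> b (Suc k)" using bge[OF k] by simp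
    qed
    define us where "us = map (\<lambda>k. sl W (b k) (b (Suc k))) [0..<n]"
    have usk: "us ! k = t k @ sl W (Q ! k + n * d) (b (Suc k))" if k: "k < n" for k
    proof -
      have o: "oo k \<le> n * d" using to[OF k] nnd by linarith
      have "us ! k = sl W (Q ! k + oo k) (b (Suc k))" unfolding us_def b_def using k by simp
      also have "\<dots> = sl W (Q ! k + oo k) (Q ! k + n * d) @ sl W (Q ! k + n * d) (b (Suc k))"
        using sl_append[of "Q ! k + oo k" "Q ! k + n * d" "b (Suc k)" W] o bge[OF k] by simp
      also have "sl W (Q ! k + oo k) (Q ! k + n * d) = t k"
      proof -
        have u: "u = take (n * d) (drop (Q ! k) W)" using Qocc[OF k] assms(3) unfolding occurs_at_def by simp
        have "t k = drop (oo k) (take (n * d) (drop (Q ! k) W))" using to[OF k] u by simp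
        also have "\<dots> = take (n * d - oo k) (drop (Q ! k + oo k) W)"
          by (simp add: drop_take add.commute)
        finally show ?thesis unfolding sl_def by simp
      qed
      finally show ?thesis .
    qed
    have ne: "us ! k \<noteq> []" if "k < n" for k
    proof -
      have "oo k < length u" using to[OF that] nnd assms(3) by linarith
      then show ?thesis using usk[OF that] to[OF that] by simp
    qed
    have lus: "length us = n" unfolding us_def by simp
    have "divisible n W"
      unfolding divisible_def
    proof (intro exI[of _ us] conjI allI impI ballI)
      show "length us = n" by (rule lus)
      fix x assume "x \<in> set us"
      then obtain k where "k < n" "x = us ! k" using lus by (metis in_set_conv_nth)
      then show "x \<noteq> []" using ne by simp
    next
      fix k assume k: "Suc k < n"
      show "succ_word (us ! k) (us ! Suc k)"
        using usk[of k] usk[of "Suc k"] k succ_from_prefix[OF tcmp[OF k] tdec[OF k]] by simp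
    next
      have "concat us = sl W (b 0) (b n) \<and> b 0 \<le> b n"
        unfolding us_def by (rule concat_slices[OF bmono])
      then show "subword (concat us) W" using sl_subword by metis
    qed
    then show ?thesis unfolding reducible_def by simp
  qed
qed

end
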